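(* Let $R$ be an integral domain of characteristic zero, $n,d\ge1$, $F\in R[x]_d$, and $G=x_0^d+\cdots+x_n^d$. Let $s\ge1$, $h\ge(d-1)(n+1)+1$, $v\in B_{ds}$ and $w\in B_h$. For $k\ge1$ and $H\in R[x]_{kds}$ let $[H]_k$ denote the vector $(H_{kv+w-t})_{t\in B_h}$. Then there is a matrix $Q$, with rows and columns indexed by $B_h$ and entries that are polynomials of degree at most $1$ in $R[k,\ell]$, such that for all integers $k_0\ge1$ and $0\le\ell_0<k_0s$, $$d(k_0s-\ell_0)\,[G^{k_0s-\ell_0-1}F^{\ell_0+1}]_{k_0}=Q(k_0,\ell_0)\,[G^{k_0s-\ell_0}F^{\ell_0}]_{k_0},$$ and consequently, for all $k_0\ge1$, in the fraction field of $R$, $$[F^{k_0s}]_{k_0}=\frac{1}{d^{k_0s}(k_0s)!}\,Q(k_0,k_0s-1)\cdots Q(k_0,1)Q(k_0,0)\,[G^{k_0s}]_{k_0}.$$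
   Context: $R[x]=R[x_0,\dots,x_n]$; $R[x]_k$ is the submodule of homogeneous polynomials of degree $k$; $B_k=\{u\in\mathbf N^{n+1}:u_0+\cdots+u_n=k\}$; for $H\in R[x]$ and $u\in\mathbf Z^{n+1}$, $H_u$ is the coefficient of $x^u=x_0^{u_0}\cdots x_n^{u_n}$ in $H$, with $H_u=0$ if some $u_i<0$. *)

theory Defs
  imports "HOL-Library.Poly_Mapping" "HOL-Computational_Algebra.Fraction_Field"
begin

text \<open>Polynomials in the variables x_0,...,x_n over R are represented as finitely
  supported maps from exponent vectors (nat =>0 nat, variable index to exponent) to R.
  Only exponent vectors supported in {0..n} are relevant.\<close>

type_synonym 'a mpoly = "(nat \<Rightarrow>\<^sub>0 nat) \<Rightarrow>\<^sub>0 'a"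

definition B :: "nat \<Rightarrow> nat \<Rightarrow> (nat \<Rightarrow>\<^sub>0 nat) set" where
  "B n k = {u. Poly_Mapping.keys u \<subseteq> {0..n} \<and> (\<Sum>i\<le>n. Poly_Mapping.lookup u i) = k}"

definition homogeneous :: "nat \<Rightarrow> nat \<Rightarrow> 'a::zero mpoly \<Rightarrow> bool" where
  "homogeneous n k H \<longleftrightarrow> Poly_Mapping.keys H \<subseteq> B n k"

definition xpow :: "nat \<Rightarrow> nat \<Rightarrow> 'a::{zero,one} mpoly" where
  "xpow i e = Poly_Mapping.single (Poly_Mapping.single i e) 1"

definition fermat :: "nat \<Rightarrow> nat \<Rightarrow> 'a::comm_semiring_1 mpoly" where
  "fermat n d = (\<Sum>i\<le>n. xpow i d)"

text \<open>H_u for u in Z^(n+1) (entries u_i for i > n are required to be 0);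
  H_u = 0 if some u_i < 0.\<close>
definition coeffZ :: "nat \<Rightarrow> 'a::zero mpoly \<Rightarrow> (nat \<Rightarrow> int) \<Rightarrow> 'a" where
  "coeffZ n H u = (if (\<forall>i. 0 \<le> u i) \<and> (\<forall>i>n. u i = 0)
                   then Poly_Mapping.lookup H (Abs_poly_mapping (\<lambda>i. nat (u i))) else 0)"

definition bracket :: "nat \<Rightarrow> (nat \<Rightarrow>\<^sub>0 nat) \<Rightarrow> (nat \<Rightarrow>\<^sub>0 nat) \<Rightarrow> nat \<Rightarrow> 'a::zero mpoly
    \<Rightarrow> (nat \<Rightarrow>\<^sub>0 nat) \<Rightarrow> 'a" where
  "bracket n v w k H t =
     coeffZ n H (\<lambda>i. int k * int (Poly_Mapping.lookup v i) + int (Poly_Mapping.lookup w i) - int (Poly_Mapping.lookup t i))"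

definition matvec :: "'i set \<Rightarrow> ('i \<Rightarrow> 'i \<Rightarrow> 'b::comm_semiring_1) \<Rightarrow> ('i \<Rightarrow> 'b) \<Rightarrow> 'i \<Rightarrow> 'b" where
  "matvec I M x = (\<lambda>t. \<Sum>t'\<in>I. M t t' * x t')"

fun iter_mat :: "'i set \<Rightarrow> (nat \<Rightarrow> 'i \<Rightarrow> 'i \<Rightarrow> 'b::comm_semiring_1) \<Rightarrow> nat \<Rightarrow> ('i \<Rightarrow> 'b) \<Rightarrow> 'i \<Rightarrow> 'b" where
  "iter_mat I M 0 x = x"
| "iter_mat I M (Suc m) x = matvec I (M m) (iter_mat I M m x)"

end

theory Submission
  imports Defs
begin

lemma pm_expand: "(P::'b \<Rightarrow>\<^sub>0 'c::comm_monoid_add) = (\<Sum>a\<in>Poly_Mapping.keys P. Poly_Mapping.single a (Poly_Mapping.lookup P a))"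
proof (rule poly_mapping_eqI)
  fix k
  show "Poly_Mapping.lookup P k = Poly_Mapping.lookup (\<Sum>a\<in>Poly_Mapping.keys P. Poly_Mapping.single a (Poly_Mapping.lookup P a)) k"
    by (simp add: lookup_sum lookup_single when_def in_keys_iff)
qed

lemma add_eq_iff_nat_pm:
  fixes a b u :: "nat \<Rightarrow>\<^sub>0 nat"
  shows "(a + b = u) \<longleftrightarrow> (\<forall>i. Poly_Mapping.lookup a i \<le> Poly_Mapping.lookup u i) \<and> b = u - a"
proof
  assume "a + b = u" then show "(\<forall>i. Poly_Mapping.lookup a i \<le> Poly_Mapping.lookup u i) \<and> b = u - a"
    by (auto simp: lookup_add poly_mapping_eq_iff lookup_minus fun_eq_iff) (metis le_add1, metis add_diff_cancel_left')
next
  assume "(\<forall>i. Poly_Mapping.lookup a i \<le> Poly_Mapping.lookup u i) \<and> b = u - a"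
  then show "a + b = u"
    by (auto simp: lookup_add poly_mapping_eq_iff lookup_minus fun_eq_iff)
qed

lemma lookup_single_mult:
  fixes Q :: "(nat \<Rightarrow>\<^sub>0 nat) \<Rightarrow>\<^sub>0 'a::comm_semiring_1"
  shows "Poly_Mapping.lookup (Poly_Mapping.single a x * Q) u =
    (if (\<forall>i. Poly_Mapping.lookup a i \<le> Poly_Mapping.lookup u i) then x * Poly_Mapping.lookup Q (u - a) else 0)"
proof -
  have "Poly_Mapping.single a x * Q = (\<Sum>b\<in>Poly_Mapping.keys Q. Poly_Mapping.single a x * Poly_Mapping.single b (Poly_Mapping.lookup Q b))"
    by (subst pm_expand[of Q]) (simp add: sum_distrib_left)
  also have "\<dots> = (\<Sum>b\<in>Poly_Mapping.keys Q. Poly_Mapping.single (a + b) (x * Poly_Mapping.lookup Q b))"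
    by (simp add: mult_single)
  finally have e: "Poly_Mapping.lookup (Poly_Mapping.single a x * Q) u = (\<Sum>b\<in>Poly_Mapping.keys Q. (x * Poly_Mapping.lookup Q b when a + b = u))"
    by (simp add: lookup_sum lookup_single)
  show ?thesis
  proof (cases "\<forall>i. Poly_Mapping.lookup a i \<le> Poly_Mapping.lookup u i")
    case True
    then have "(\<Sum>b\<in>Poly_Mapping.keys Q. (x * Poly_Mapping.lookup Q b when a + b = u))
        = (\<Sum>b\<in>Poly_Mapping.keys Q. (if b = u - a then x * Poly_Mapping.lookup Q b else 0))"
      by (intro sum.cong) (auto simp: add_eq_iff_nat_pm when_def)
    also have "\<dots> = x * Poly_Mapping.lookup Q (u - a)"
      by (simp add: in_keys_iff)
    finally show ?thesis using e True by simp
  next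
    case False
    then show ?thesis using e by (auto simp: add_eq_iff_nat_pm when_def intro!: sum.neutral)
  qed
qed

definition E :: "nat \<Rightarrow> 'a::comm_semiring_1 mpoly \<Rightarrow> 'a mpoly" where
  "E i P = Poly_Mapping.mapp (\<lambda>u c. of_nat (Poly_Mapping.lookup u i) * c) P"

lemma lookup_E: "Poly_Mapping.lookup (E i P) u = of_nat (Poly_Mapping.lookup u i) * Poly_Mapping.lookup P u"
  by (simp add: E_def lookup_mapp when_def in_keys_iff)

lemma keys_E: "Poly_Mapping.keys (E i P) \<subseteq> Poly_Mapping.keys P"
  unfolding E_def by (rule keys_mapp_subset)

lemma E_add: "E i (P + Q) = E i P + E i Q"
  by (rule poly_mapping_eqI) (simp add: lookup_E lookup_add algebra_simps)

lemma E_sum: "E i (sum f A) = (\<Sum>a\<in>A. E i (f a))"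
  by (rule poly_mapping_eqI) (simp add: lookup_E lookup_sum sum_distrib_left)

lemma E_single: "E i (Poly_Mapping.single a x) = Poly_Mapping.single a (of_nat (Poly_Mapping.lookup a i) * x)"
  by (rule poly_mapping_eqI) (simp add: lookup_E lookup_single when_def)

lemma E_single_mult: "E i (Poly_Mapping.single a x * Q) = E i (Poly_Mapping.single a x) * Q + Poly_Mapping.single a x * E i Q"
proof (rule poly_mapping_eqI)
  fix u
  show "Poly_Mapping.lookup (E i (Poly_Mapping.single a x * Q)) u = Poly_Mapping.lookup (E i (Poly_Mapping.single a x) * Q + Poly_Mapping.single a x * E i Q) u"
  proof (cases "\<forall>j. Poly_Mapping.lookup a j \<le> Poly_Mapping.lookup u j")
    case True
    then have h: "Poly_Mapping.lookup u i = Poly_Mapping.lookup a i + Poly_Mapping.lookup (u - a) i"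
      by (simp add: lookup_minus)
    have "Poly_Mapping.lookup (E i (Poly_Mapping.single a x * Q)) u = of_nat (Poly_Mapping.lookup u i) * (x * Poly_Mapping.lookup Q (u - a))"
      using True by (simp add: lookup_single_mult lookup_E)
    moreover have "Poly_Mapping.lookup (E i (Poly_Mapping.single a x) * Q + Poly_Mapping.single a x * E i Q) u
       = of_nat (Poly_Mapping.lookup a i) * x * Poly_Mapping.lookup Q (u - a) + x * (of_nat (Poly_Mapping.lookup (u - a) i) * Poly_Mapping.lookup Q (u - a))"
      using True by (simp add: E_single lookup_add lookup_single_mult lookup_E)
    ultimately show ?thesis unfolding h by (simp add: algebra_simps)
  next
    case False
    then show ?thesis
      by (auto simp: E_single lookup_add lookup_single_mult lookup_E)
  qed
qed

lemma E_mult: "E i (P * Q) = E i P * Q + P * E i Q"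
proof -
  let ?s = "\<lambda>a. Poly_Mapping.single a (Poly_Mapping.lookup P a)"
  have "E i (P * Q) = E i ((\<Sum>a\<in>Poly_Mapping.keys P. ?s a) * Q)"
    by (subst pm_expand[of P]) simp
  also have "\<dots> = (\<Sum>a\<in>Poly_Mapping.keys P. E i (?s a) * Q + ?s a * E i Q)"
    by (simp add: sum_distrib_right E_sum E_single_mult)
  also have "\<dots> = E i (\<Sum>a\<in>Poly_Mapping.keys P. ?s a) * Q + (\<Sum>a\<in>Poly_Mapping.keys P. ?s a) * E i Q"
    by (simp add: sum.distrib sum_distrib_right E_sum)
  also have "\<dots> = E i P * Q + P * E i Q"
    by (subst (3 4) pm_expand[of P]) simp
  finally show ?thesis .
qed

lemma E_power: "E i (P ^ Suc m) = of_nat (Suc m) * P ^ m * E i P"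
proof (induction m)
  case 0 then show ?case by simp
next
  case (Suc m)
  have "E i (P ^ Suc (Suc m)) = E i (P * P ^ Suc m)" by simp
  also have "\<dots> = E i P * P ^ Suc m + P * (of_nat (Suc m) * P ^ m * E i P)"
    by (simp only: E_mult Suc)
  also have "\<dots> = of_nat (Suc (Suc m)) * P ^ Suc m * E i P"
    by (simp add: algebra_simps)
  finally show ?case .
qed

lemma lookup_of_nat_mult:
  fixes X :: "(nat \<Rightarrow>\<^sub>0 nat) \<Rightarrow>\<^sub>0 'a::comm_semiring_1"
  shows "Poly_Mapping.lookup (of_nat c * X) u = of_nat c * Poly_Mapping.lookup X u"
proof -
  have "(of_nat c :: (nat \<Rightarrow>\<^sub>0 nat) \<Rightarrow>\<^sub>0 'a) = Poly_Mapping.single 0 (of_nat c)" by simp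
  then show ?thesis by (simp only: lookup_single_mult) simp
qed

lemma E_xpow: "E i (xpow j e) = (if i = j then of_nat e * xpow j e else 0)"
  by (rule poly_mapping_eqI) (auto simp: xpow_def lookup_E lookup_single when_def lookup_of_nat_mult)

lemma E_fermat: "i \<le> n \<Longrightarrow> E i (fermat n d :: 'a::comm_semiring_1 mpoly) = of_nat d * xpow i d"
  unfolding fermat_def E_sum E_xpow by (simp add: sum.delta)

lemma finite_B: "finite (B n h)"
proof -
  let ?S = "{f::nat\<Rightarrow>nat. \<forall>x. (x \<in> {0..n} \<longrightarrow> f x \<in> {0..h}) \<and> (x \<notin> {0..n} \<longrightarrow> f x = 0)}"
  have fin: "finite ?S" by (rule finite_set_of_finite_funs) auto
  have "B n h \<subseteq> Abs_poly_mapping ` ?S"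
  proof
    fix u assume u: "u \<in> B n h"
    then have k: "Poly_Mapping.keys u \<subseteq> {0..n}" and s: "(\<Sum>i\<le>n. Poly_Mapping.lookup u i) = h"
      by (auto simp: B_def)
    have "Poly_Mapping.lookup u \<in> ?S"
    proof (intro CollectI allI conjI impI)
      fix x assume "x \<in> {0..n}"
      then have "Poly_Mapping.lookup u x \<le> (\<Sum>i\<le>n. Poly_Mapping.lookup u i)"
        by (intro member_le_sum) auto
      then show "Poly_Mapping.lookup u x \<in> {0..h}" using s by simp
    next
      fix x assume "x \<notin> {0..n}"
      then show "Poly_Mapping.lookup u x = 0" using k by (auto simp: in_keys_iff)
    qed
    moreover have "u = Abs_poly_mapping (Poly_Mapping.lookup u)" by simp
    ultimately show "u \<in> Abs_poly_mapping ` ?S" by blast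
  qed
  then show ?thesis using fin finite_surj by blast
qed

lemma B_add: "a \<in> B n p \<Longrightarrow> b \<in> B n q \<Longrightarrow> a + b \<in> B n (p + q)"
  using keys_add[of a b] by (auto simp: B_def lookup_add sum.distrib)

lemma keys_mult_B:
  assumes "Poly_Mapping.keys P \<subseteq> B n p" "Poly_Mapping.keys Q \<subseteq> B n q"
  shows "Poly_Mapping.keys (P * Q) \<subseteq> B n (p + q)"
  using keys_mult[of P Q] assms B_add by blast

lemma lookup_single_scale:
  fixes P :: "'a::comm_semiring_1 mpoly"
  shows "Poly_Mapping.lookup (Poly_Mapping.single t x * P) u = x * Poly_Mapping.lookup (Poly_Mapping.single t 1 * P) u"
  by (simp add: lookup_single_mult)

lemma coef_expand:
  fixes C P :: "'a::comm_semiring_1 mpoly"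
  assumes "finite I" "Poly_Mapping.keys C \<subseteq> I"
  shows "Poly_Mapping.lookup (C * P) N = (\<Sum>t\<in>I. Poly_Mapping.lookup C t * Poly_Mapping.lookup (Poly_Mapping.single t 1 * P) N)"
proof -
  have "Poly_Mapping.lookup (C * P) N = Poly_Mapping.lookup ((\<Sum>t\<in>Poly_Mapping.keys C. Poly_Mapping.single t (Poly_Mapping.lookup C t)) * P) N"
    by (subst pm_expand[of C]) simp
  also have "\<dots> = (\<Sum>t\<in>Poly_Mapping.keys C. Poly_Mapping.lookup C t * Poly_Mapping.lookup (Poly_Mapping.single t 1 * P) N)"
    by (simp add: sum_distrib_right lookup_sum lookup_single_scale[where x = "Poly_Mapping.lookup C _"])
  also have "\<dots> = (\<Sum>t\<in>I. Poly_Mapping.lookup C t * Poly_Mapping.lookup (Poly_Mapping.single t 1 * P) N)"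
    using assms by (intro sum.mono_neutral_left) (auto simp: in_keys_iff)
  finally show ?thesis .
qed

definition Nv :: "nat \<Rightarrow> (nat \<Rightarrow>\<^sub>0 nat) \<Rightarrow> (nat \<Rightarrow>\<^sub>0 nat) \<Rightarrow> (nat \<Rightarrow>\<^sub>0 nat)" where
  "Nv k v w = Abs_poly_mapping (\<lambda>i. k * Poly_Mapping.lookup v i + Poly_Mapping.lookup w i)"

lemma lookup_Nv: "Poly_Mapping.lookup (Nv k v w) i = k * Poly_Mapping.lookup v i + Poly_Mapping.lookup w i"
proof -
  have "{i. k * Poly_Mapping.lookup v i + Poly_Mapping.lookup w i \<noteq> 0} \<subseteq> Poly_Mapping.keys v \<union> Poly_Mapping.keys w"
    by (auto simp: in_keys_iff)
  then have "finite {i. k * Poly_Mapping.lookup v i + Poly_Mapping.lookup w i \<noteq> 0}"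
    by (rule finite_subset) auto
  then show ?thesis by (simp add: Nv_def)
qed

lemma bracket_eq:
  fixes H :: "'a::comm_semiring_1 mpoly"
  assumes "Poly_Mapping.keys t \<subseteq> {0..n}" "Poly_Mapping.keys v \<subseteq> {0..n}" "Poly_Mapping.keys w \<subseteq> {0..n}"
  shows "bracket n v w k H t = Poly_Mapping.lookup (Poly_Mapping.single t 1 * H) (Nv k v w)"
proof -
  let ?u = "\<lambda>i. int k * int (Poly_Mapping.lookup v i) + int (Poly_Mapping.lookup w i) - int (Poly_Mapping.lookup t i)"
  have out: "\<forall>i>n. ?u i = 0"
  proof (intro allI impI)
    fix i assume "n < i"
    then have "i \<notin> Poly_Mapping.keys t" "i \<notin> Poly_Mapping.keys v" "i \<notin> Poly_Mapping.keys w" using assms by auto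
    then show "?u i = 0" by (simp add: in_keys_iff)
  qed
  have cond: "(\<forall>i. 0 \<le> ?u i) \<longleftrightarrow> (\<forall>i. Poly_Mapping.lookup t i \<le> Poly_Mapping.lookup (Nv k v w) i)"
  proof -
    have "0 \<le> ?u i \<longleftrightarrow> Poly_Mapping.lookup t i \<le> Poly_Mapping.lookup (Nv k v w) i" for i
    proof -
      have e: "int k * int (Poly_Mapping.lookup v i) = int (k * Poly_Mapping.lookup v i)" by simp
      show ?thesis unfolding lookup_Nv e by linarith
    qed
    then show ?thesis by blast
  qed
  let ?c = "\<forall>i. Poly_Mapping.lookup t i \<le> Poly_Mapping.lookup (Nv k v w) i"
  have c1: "((\<forall>i. 0 \<le> ?u i) \<and> (\<forall>i>n. ?u i = 0)) \<longleftrightarrow> ?c" using cond out by blast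
  have L: "bracket n v w k H t = (if ?c then Poly_Mapping.lookup H (Abs_poly_mapping (\<lambda>i. nat (?u i))) else 0)"
    unfolding bracket_def coeffZ_def c1 by (rule refl)
  have R: "Poly_Mapping.lookup (Poly_Mapping.single t 1 * H) (Nv k v w) = (if ?c then Poly_Mapping.lookup H (Nv k v w - t) else 0)"
    unfolding lookup_single_mult by simp
  show ?thesis
  proof (cases ?c)
    case True
    have "(\<lambda>i. nat (?u i)) = Poly_Mapping.lookup (Nv k v w - t)"
    proof
      fix i show "nat (?u i) = Poly_Mapping.lookup (Nv k v w - t) i"
      proof -
        have e: "int k * int (Poly_Mapping.lookup v i) = int (k * Poly_Mapping.lookup v i)" by simp
        have "?u i = int (k * Poly_Mapping.lookup v i + Poly_Mapping.lookup w i - Poly_Mapping.lookup t i)"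
          using True[rule_format, of i] unfolding e lookup_Nv by (simp add: of_nat_diff)
        then show ?thesis by (simp add: lookup_minus lookup_Nv)
      qed
    qed
    then have "Abs_poly_mapping (\<lambda>i. nat (?u i)) = Nv k v w - t"
      by (simp add: lookup_inverse)
    then show ?thesis unfolding L R by simp
  next
    case False
    show ?thesis unfolding L R if_not_P[OF False] by (rule refl)
  qed
qed

lemma pigeon:
  assumes "t \<in> B n h" "h \<ge> (d - 1) * (n + 1) + 1"
  shows "\<exists>i. i \<le> n \<and> d \<le> Poly_Mapping.lookup t i"
proof (rule ccontr)
  assume "\<not> ?thesis"
  then have "\<forall>i\<in>{..n}. Poly_Mapping.lookup t i \<le> d - 1" by auto
  then have "(\<Sum>i\<le>n. Poly_Mapping.lookup t i) \<le> card {..n} * (d - 1)"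
    using sum_bounded_above[of "{..n}" "Poly_Mapping.lookup t" "d - 1"] by auto
  then show False using assms by (auto simp: B_def algebra_simps)
qed

lemma of_nat_single_mult:
  "(of_nat c :: 'a::comm_semiring_1 mpoly) * Poly_Mapping.single a x = Poly_Mapping.single a (of_nat c * x)"
proof -
  have "(of_nat c :: 'a mpoly) = Poly_Mapping.single 0 (of_nat c)" by simp
  then show ?thesis by (simp only: mult_single add_0_left)
qed

lemma main_step:
  fixes F :: "'a::comm_ring_1 mpoly"
  assumes keysF: "Poly_Mapping.keys F \<subseteq> B n d"
    and tB: "t \<in> B n h" and iN: "i \<le> n" and dt: "d \<le> Poly_Mapping.lookup t i"
    and m1: "m \<ge> 1"
  defines "G \<equiv> (fermat n d :: 'a mpoly)"
    and "tp \<equiv> t - Poly_Mapping.single i d"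
  shows "of_nat (d * m) * Poly_Mapping.lookup (Poly_Mapping.single t 1 * (G ^ (m - 1) * F ^ (l + 1))) N =
    (\<Sum>t''\<in>B n h. ((of_nat (Poly_Mapping.lookup N i) - of_nat (Poly_Mapping.lookup tp i)) * Poly_Mapping.lookup (Poly_Mapping.single tp 1 * F) t''
         - (of_nat l + 1) * Poly_Mapping.lookup (Poly_Mapping.single tp 1 * E i F) t'')
      * Poly_Mapping.lookup (Poly_Mapping.single t'' 1 * (G ^ m * F ^ l)) N)"
proof -
  let ?s = "Poly_Mapping.single tp (1::'a)"
  let ?P0 = "G ^ m * F ^ l"
  define C1 where "C1 = ?s * F"
  define C2 where "C2 = ?s * E i F"
  have tsum: "tp + Poly_Mapping.single i d = t"
    by (rule poly_mapping_eqI) (use dt in \<open>auto simp: tp_def lookup_add lookup_minus lookup_single when_def\<close>)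
  have s1: "Poly_Mapping.single t 1 = ?s * xpow i d"
    by (simp add: xpow_def mult_single tsum)
  have s2: "E i (G ^ m) = of_nat m * G ^ (m - 1) * (of_nat d * xpow i d)"
  proof -
    have "m = Suc (m - 1)" using m1 by simp
    then have "E i (G ^ m) = of_nat (Suc (m - 1)) * G ^ (m - 1) * E i G"
      by (metis E_power)
    then show ?thesis using m1 iN by (simp add: G_def E_fermat)
  qed
  let ?Bp = "?s * F ^ (l + 1)"
  have s3: "of_nat (d * m) * (Poly_Mapping.single t 1 * (G ^ (m - 1) * F ^ (l + 1))) = ?Bp * E i (G ^ m)"
    unfolding s1 s2 by (simp add: algebra_simps)
  have s4: "?Bp * E i (G ^ m) = E i (?Bp * G ^ m) - E i ?Bp * G ^ m"
    by (simp add: E_mult)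
  have s5: "E i ?Bp = of_nat (Poly_Mapping.lookup tp i) * (?s * F ^ (l + 1)) + ?s * (of_nat (l + 1) * F ^ l * E i F)"
  proof -
    have "E i ?Bp = E i ?s * F ^ (l + 1) + ?s * E i (F ^ Suc l)"
      by (simp add: E_single_mult)
    also have "E i ?s = of_nat (Poly_Mapping.lookup tp i) * ?s"
      by (simp add: E_single of_nat_single_mult)
    also have "E i (F ^ Suc l) = of_nat (Suc l) * F ^ l * E i F"
      by (rule E_power)
    finally show ?thesis by (simp add: algebra_simps)
  qed
  have s6: "?Bp * G ^ m = C1 * ?P0"
    by (simp add: C1_def algebra_simps)
  have s7: "E i ?Bp * G ^ m = of_nat (Poly_Mapping.lookup tp i) * (C1 * ?P0) + of_nat (l + 1) * (C2 * ?P0)"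
    unfolding s5 by (simp add: C1_def C2_def algebra_simps)
  have lhs: "of_nat (d * m) * Poly_Mapping.lookup (Poly_Mapping.single t 1 * (G ^ (m - 1) * F ^ (l + 1))) N =
     of_nat (Poly_Mapping.lookup N i) * Poly_Mapping.lookup (C1 * ?P0) N
     - of_nat (Poly_Mapping.lookup tp i) * Poly_Mapping.lookup (C1 * ?P0) N
     - of_nat (l + 1) * Poly_Mapping.lookup (C2 * ?P0) N"
  proof -
    have "of_nat (d * m) * Poly_Mapping.lookup (Poly_Mapping.single t 1 * (G ^ (m - 1) * F ^ (l + 1))) N
      = Poly_Mapping.lookup (of_nat (d * m) * (Poly_Mapping.single t 1 * (G ^ (m - 1) * F ^ (l + 1)))) N"
      by (rule lookup_of_nat_mult[symmetric])
    also have "\<dots> = Poly_Mapping.lookup (E i (C1 * ?P0) - (of_nat (Poly_Mapping.lookup tp i) * (C1 * ?P0) + of_nat (l + 1) * (C2 * ?P0))) N"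
      unfolding s3 s4 s6 s7 by (rule refl)
    also have "\<dots> = of_nat (Poly_Mapping.lookup N i) * Poly_Mapping.lookup (C1 * ?P0) N
     - of_nat (Poly_Mapping.lookup tp i) * Poly_Mapping.lookup (C1 * ?P0) N
     - of_nat (l + 1) * Poly_Mapping.lookup (C2 * ?P0) N"
      by (simp only: lookup_minus lookup_add lookup_E lookup_of_nat_mult diff_diff_eq)
    finally show ?thesis .
  qed
  have tpB: "tp \<in> B n (h - d)"
  proof -
    have k: "Poly_Mapping.keys tp \<subseteq> {0..n}"
      using tB by (auto simp: B_def tp_def in_keys_iff lookup_minus)
    have "(\<Sum>j\<le>n. Poly_Mapping.lookup t j) = (\<Sum>j\<le>n. Poly_Mapping.lookup tp j) + (\<Sum>j\<le>n. Poly_Mapping.lookup (Poly_Mapping.single i d) j)"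
      by (subst tsum[symmetric]) (simp add: lookup_add sum.distrib)
    also have "(\<Sum>j\<le>n. Poly_Mapping.lookup (Poly_Mapping.single i d) j) = d"
      using iN by (simp add: lookup_single when_def)
    finally show ?thesis using tB k by (auto simp: B_def)
  qed
  have dh: "d \<le> h"
  proof -
    have "Poly_Mapping.lookup t i \<le> (\<Sum>j\<le>n. Poly_Mapping.lookup t j)"
      using iN by (intro member_le_sum) auto
    then show ?thesis using tB dt by (simp add: B_def)
  qed
  have kC1: "Poly_Mapping.keys C1 \<subseteq> B n h"
  proof -
    have "Poly_Mapping.keys ?s \<subseteq> B n (h - d)" using tpB by simp
    then have "Poly_Mapping.keys C1 \<subseteq> B n (h - d + d)" unfolding C1_def using keysF by (rule keys_mult_B)
    then show ?thesis using dh by simp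
  qed
  have kC2: "Poly_Mapping.keys C2 \<subseteq> B n h"
  proof -
    have "Poly_Mapping.keys ?s \<subseteq> B n (h - d)" using tpB by simp
    moreover have "Poly_Mapping.keys (E i F) \<subseteq> B n d" using keysF keys_E by blast
    ultimately have "Poly_Mapping.keys C2 \<subseteq> B n (h - d + d)" unfolding C2_def by (rule keys_mult_B)
    then show ?thesis using dh by simp
  qed
  show ?thesis
    unfolding lhs coef_expand[OF finite_B kC1] coef_expand[OF finite_B kC2]
    unfolding C1_def[symmetric] C2_def[symmetric]
    by (simp add: sum_distrib_left sum_subtractf[symmetric] algebra_simps)
qed

lemma Fract_sum: "Fract (sum f A) (1::'a::idom) = (\<Sum>a\<in>A. Fract (f a) 1)"
proof (induction A rule: infinite_finite_induct)
  case (infinite A) then show ?case by (simp add: fract_collapse)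
next
  case empty then show ?case by (simp add: fract_collapse)
next
  case (insert x F) then show ?case by (simp add: insert.IH[symmetric])
qed

lemma iter_part:
  fixes Br :: "nat \<Rightarrow> 'i \<Rightarrow> 'a::idom" and Q :: "nat \<Rightarrow> 'i \<Rightarrow> 'i \<Rightarrow> 'a"
  assumes step: "\<And>j t. j < K \<Longrightarrow> t \<in> I \<Longrightarrow> of_nat (d * (K - j)) * Br (Suc j) t = matvec I (Q j) (Br j) t"
  shows "j \<le> K \<Longrightarrow> t \<in> I \<Longrightarrow> Fract (of_nat (d ^ j * (\<Prod>r<j. K - r)) * Br j t) 1
     = iter_mat I (\<lambda>l t t'. Fract (Q l t t') 1) j (\<lambda>t'. Fract (Br 0 t') 1) t"
proof (induction j arbitrary: t)
  case 0 then show ?case by simp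
next
  case (Suc j)
  let ?c = "of_nat (d ^ j * (\<Prod>r<j. K - r)) :: 'a"
  have "iter_mat I (\<lambda>l t t'. Fract (Q l t t') 1) (Suc j) (\<lambda>t'. Fract (Br 0 t') 1) t
     = (\<Sum>t'\<in>I. Fract (Q j t t') 1 * iter_mat I (\<lambda>l t t'. Fract (Q l t t') 1) j (\<lambda>t'. Fract (Br 0 t') 1) t')"
    by (simp add: matvec_def)
  also have "\<dots> = (\<Sum>t'\<in>I. Fract (Q j t t') 1 * Fract (?c * Br j t') 1)"
    using Suc.IH Suc.prems by (intro sum.cong) auto
  also have "\<dots> = Fract (\<Sum>t'\<in>I. Q j t t' * (?c * Br j t')) 1"
    by (simp add: Fract_sum)
  also have "(\<Sum>t'\<in>I. Q j t t' * (?c * Br j t')) = ?c * matvec I (Q j) (Br j) t"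
    by (simp add: matvec_def sum_distrib_left algebra_simps)
  also have "\<dots> = ?c * (of_nat (d * (K - j)) * Br (Suc j) t)"
    using step[of j t] Suc.prems by simp
  also have "\<dots> = of_nat (d ^ Suc j * (\<Prod>r<Suc j. K - r)) * Br (Suc j) t"
  proof -
    have "d ^ Suc j * (\<Prod>r<Suc j. K - r) = (d ^ j * (\<Prod>r<j. K - r)) * (d * (K - j))"
      by (simp add: prod.lessThan_Suc mult_ac)
    then show ?thesis by (simp only: of_nat_mult mult.assoc)
  qed
  finally show ?case by simp
qed

lemma iter_final:
  fixes Br :: "nat \<Rightarrow> 'i \<Rightarrow> 'a::{idom,ring_char_0}" and Q :: "nat \<Rightarrow> 'i \<Rightarrow> 'i \<Rightarrow> 'a"
  assumes step: "\<And>j t. j < K \<Longrightarrow> t \<in> I \<Longrightarrow> of_nat (d * (K - j)) * Br (Suc j) t = matvec I (Q j) (Br j) t"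
    and d1: "d \<ge> 1" and tI: "t \<in> I"
  shows "Fract (Br K t) 1 = (1 / (of_nat (d ^ K * fact K))) *
     iter_mat I (\<lambda>l t t'. Fract (Q l t t') 1) K (\<lambda>t'. Fract (Br 0 t') 1) t"
proof -
  have pf: "(\<Prod>r<K. K - r) = fact K"
    by (simp add: fact_prod_rev atLeast0LessThan)
  have it: "Fract (of_nat (d ^ K * fact K) * Br K t) 1 = iter_mat I (\<lambda>l t t'. Fract (Q l t t') 1) K (\<lambda>t'. Fract (Br 0 t') 1) t"
    using iter_part[OF step, of K t] tI pf by simp
  have nz: "(of_nat (d ^ K * fact K) :: 'a fract) \<noteq> 0"
  proof -
    have "d ^ K * fact K \<noteq> 0" using d1 by simp
    then have "(of_nat (d ^ K * fact K) :: 'a) \<noteq> 0" by (metis of_nat_eq_0_iff)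
    then show ?thesis by (simp add: of_nat_fract Zero_fract_def eq_fract)
  qed
  have "Fract (of_nat (d ^ K * fact K) * Br K t) 1 = of_nat (d ^ K * fact K) * Fract (Br K t) 1"
    by (simp add: of_nat_fract)
  then show ?thesis using it nz by (simp add: field_simps)
qed

theorem theorem4p1:
  fixes F :: "'a::{idom, ring_char_0} mpoly"
    and n d s h :: nat
    and v w :: "nat \<Rightarrow>\<^sub>0 nat"
  assumes "n \<ge> 1" and "d \<ge> 1"
    and "homogeneous n d F"
    and "s \<ge> 1"
    and "h \<ge> (d - 1) * (n + 1) + 1"
    and "v \<in> B n (d * s)" and "w \<in> B n h"
  shows "\<exists>a b c :: (nat \<Rightarrow>\<^sub>0 nat) \<Rightarrow> (nat \<Rightarrow>\<^sub>0 nat) \<Rightarrow> 'a.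
    let G = (fermat n d :: 'a mpoly);
        Q = (\<lambda>k l t t'. a t t' + of_nat k * b t t' + of_nat l * c t t')
    in (\<forall>k0 l0. k0 \<ge> 1 \<longrightarrow> l0 < k0 * s \<longrightarrow>
          (\<forall>t\<in>B n h.
             of_nat (d * (k0 * s - l0)) *
               bracket n v w k0 (G ^ (k0 * s - l0 - 1) * F ^ (l0 + 1)) t
             = matvec (B n h) (Q k0 l0) (bracket n v w k0 (G ^ (k0 * s - l0) * F ^ l0)) t))
     \<and> (\<forall>k0. k0 \<ge> 1 \<longrightarrow>
          (\<forall>t\<in>B n h.
             Fract (bracket n v w k0 (F ^ (k0 * s)) t) 1
             = (1 / (of_nat (d ^ (k0 * s) * fact (k0 * s)))) *
               iter_mat (B n h) (\<lambda>l t t'. Fract (Q k0 l t t') 1) (k0 * s)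
                 (\<lambda>t'. Fract (bracket n v w k0 (G ^ (k0 * s)) t') 1) t))"
proof -
  note hyp = assms
  define G where "G = (fermat n d :: 'a mpoly)"
  define iS where "iS = (\<lambda>t. SOME i. i \<le> n \<and> d \<le> Poly_Mapping.lookup t i)"
  define tp where "tp = (\<lambda>t. t - Poly_Mapping.single (iS t) d)"
  define C1 where "C1 = (\<lambda>t. Poly_Mapping.single (tp t) (1::'a) * F)"
  define C2 where "C2 = (\<lambda>t. Poly_Mapping.single (tp t) (1::'a) * E (iS t) F)"
  define a where "a = (\<lambda>t t''. (of_nat (Poly_Mapping.lookup w (iS t)) - of_nat (Poly_Mapping.lookup (tp t) (iS t))) * Poly_Mapping.lookup (C1 t) t''
      - Poly_Mapping.lookup (C2 t) t'')"
  define b where "b = (\<lambda>t t''. of_nat (Poly_Mapping.lookup v (iS t)) * Poly_Mapping.lookup (C1 t) t'')"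
  define c where "c = (\<lambda>t t''. - Poly_Mapping.lookup (C2 t) t'')"
  have kv: "Poly_Mapping.keys v \<subseteq> {0..n}" and kw: "Poly_Mapping.keys w \<subseteq> {0..n}"
    using hyp(6,7) by (auto simp: B_def)
  have kF: "Poly_Mapping.keys F \<subseteq> B n d" using hyp(3) by (simp add: homogeneous_def)
  have br: "\<And>k H t. t \<in> B n h \<Longrightarrow> bracket n v w k (H :: 'a mpoly) t = Poly_Mapping.lookup (Poly_Mapping.single t 1 * H) (Nv k v w)"
    by (rule bracket_eq) (use kv kw in \<open>auto simp: B_def\<close>)
  have P1: "of_nat (d * (k0 * s - l0)) * bracket n v w k0 (G ^ (k0 * s - l0 - 1) * F ^ (l0 + 1)) t
       = matvec (B n h) (\<lambda>t t'. a t t' + of_nat k0 * b t t' + of_nat l0 * c t t') (bracket n v w k0 (G ^ (k0 * s - l0) * F ^ l0)) t"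
    if l0k: "l0 < k0 * s" and tB: "t \<in> B n h" for k0 l0 t
  proof -
    define m where "m = k0 * s - l0"
    have m1: "m \<ge> 1" using l0k by (simp add: m_def)
    have ex: "\<exists>i. i \<le> n \<and> d \<le> Poly_Mapping.lookup t i" by (rule pigeon[OF tB hyp(5)])
    have iN: "iS t \<le> n" and dt: "d \<le> Poly_Mapping.lookup t (iS t)"
      using someI_ex[OF ex] by (auto simp: iS_def)
    let ?N = "Nv k0 v w"
    have ms: "of_nat (d * m) * Poly_Mapping.lookup (Poly_Mapping.single t 1 * (G ^ (m - 1) * F ^ (l0 + 1))) ?N =
      (\<Sum>t''\<in>B n h. ((of_nat (Poly_Mapping.lookup ?N (iS t)) - of_nat (Poly_Mapping.lookup (tp t) (iS t))) * Poly_Mapping.lookup (C1 t) t''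
         - (of_nat l0 + 1) * Poly_Mapping.lookup (C2 t) t'')
      * Poly_Mapping.lookup (Poly_Mapping.single t'' 1 * (G ^ m * F ^ l0)) ?N)"
      unfolding G_def tp_def C1_def C2_def by (rule main_step[OF kF tB iN dt m1])
    have L: "bracket n v w k0 (G ^ (k0 * s - l0 - 1) * F ^ (l0 + 1)) t
        = Poly_Mapping.lookup (Poly_Mapping.single t 1 * (G ^ (m - 1) * F ^ (l0 + 1))) ?N"
      using br[OF tB] by (simp add: m_def)
    have R: "matvec (B n h) (\<lambda>t t'. a t t' + of_nat k0 * b t t' + of_nat l0 * c t t') (bracket n v w k0 (G ^ (k0 * s - l0) * F ^ l0)) t
      = (\<Sum>t''\<in>B n h. (a t t'' + of_nat k0 * b t t'' + of_nat l0 * c t t'') * Poly_Mapping.lookup (Poly_Mapping.single t'' 1 * (G ^ m * F ^ l0)) ?N)"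
      unfolding matvec_def m_def using br by (intro sum.cong) auto
    have coef: "a t t'' + of_nat k0 * b t t'' + of_nat l0 * c t t'' =
       (of_nat (Poly_Mapping.lookup ?N (iS t)) - of_nat (Poly_Mapping.lookup (tp t) (iS t))) * Poly_Mapping.lookup (C1 t) t''
         - (of_nat l0 + 1) * Poly_Mapping.lookup (C2 t) t''" for t''
      by (simp add: a_def b_def c_def lookup_Nv algebra_simps)
    show ?thesis unfolding L R coef using ms by (simp only: m_def)
  qed
  have P2: "Fract (bracket n v w k0 (F ^ (k0 * s)) t) 1
             = (1 / (of_nat (d ^ (k0 * s) * fact (k0 * s)))) *
               iter_mat (B n h) (\<lambda>l t t'. Fract (a t t' + of_nat k0 * b t t' + of_nat l * c t t') 1) (k0 * s)
                 (\<lambda>t'. Fract (bracket n v w k0 (G ^ (k0 * s)) t') 1) t"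
    if tB: "t \<in> B n h" for k0 t
  proof -
    let ?K = "k0 * s"
    have step: "of_nat (d * (?K - j)) * bracket n v w k0 (G ^ (?K - Suc j) * F ^ Suc j) t
        = matvec (B n h) (\<lambda>t t'. a t t' + of_nat k0 * b t t' + of_nat j * c t t') (bracket n v w k0 (G ^ (?K - j) * F ^ j)) t"
      if "j < ?K" "t \<in> B n h" for j t
    proof -
      have e1: "?K - j - 1 = ?K - Suc j" by simp
      show ?thesis using P1[OF that] unfolding e1 Suc_eq_plus1 .
    qed
    have "Fract (bracket n v w k0 (G ^ (?K - ?K) * F ^ ?K) t) 1
       = (1 / (of_nat (d ^ ?K * fact ?K))) *
         iter_mat (B n h) (\<lambda>l t t'. Fract (a t t' + of_nat k0 * b t t' + of_nat l * c t t') 1) ?K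
           (\<lambda>t'. Fract (bracket n v w k0 (G ^ (?K - 0) * F ^ 0) t') 1) t"
      by (rule iter_final[where Br = "\<lambda>j t. bracket n v w k0 (G ^ (?K - j) * F ^ j) t"
            and Q = "\<lambda>j t t'. a t t' + of_nat k0 * b t t' + of_nat j * c t t'", OF step hyp(2) tB])
    then show ?thesis by simp
  qed
  show ?thesis
    unfolding Let_def G_def[symmetric]
    apply (rule exI[of _ a], rule exI[of _ b], rule exI[of _ c])
    apply (intro conjI allI impI ballI)
     apply (rule P1, assumption, assumption)
    apply (rule P2, assumption)
    done
qed

end
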